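(* Let $\mathcal V$ be a finite alphabet, $\mathcal V^*$ the set of finite strings over $\mathcal V$, $e$ an environment, $p$ a probability distribution on test suites $t\in\mathcal V^*$, and $c_1,c_2\in\mathcal V^*$ fixed implementations. Let $$\mathrm{sim}_{p,e}(c_1,c_2):=\mathbb E_{t\sim p}\Big[\tfrac{1}{|t|}\sum_{k=1}^{|t|}\mathbf 1\{O_k(c_1,t\mid e)=O_k(c_2,t\mid e)\}\Big]$$ and suppose $\mathrm{sim}_{p,e}(c_1,c_2)=\mu\in(0,1)$. For $m\ge1$, draw $t_1,\dots,t_m\sim p$ i.i.d. and define the smooth estimator $$\widehat{\mathrm{sim}}_{p,e;m}(c_1,c_2):=\frac1m\sum_{j=1}^m\frac{1}{|t_j|}\sum_{k=1}^{|t_j|}\mathbf 1\{O_k(c_1,t_j\mid e)=O_k(c_2,t_j\mid e)\}$$ and the sharp estimator $\widehat{\mathrm{sim}}^\infty_{p,e;m}(c_1,c_2):=\lim_{s\to\infty}\big(\widehat{\mathrm{sim}}_{p,e;m}(c_1,c_2)\big)^s=\mathbf 1\{\widehat{\mathrm{sim}}_{p,e;m}(c_1,c_2)=1\}$. For an estimator $\widehat X$ let $\mathrm{SNR}(\widehat X):=(\mathbb E[\widehat X])^2/\mathrm{Var}(\widehat X)$. Then for every $m\ge1$, $$\frac{\mathrm{SNR}(\widehat{\mathrm{sim}}_{p,e;m})}{\mathrm{SNR}(\widehat{\mathrm{sim}}^\infty_{p,e;m})}\ \ge\ m\Big(\frac1\mu\Big)^{m-1}\cdot\frac{1-\mu^m}{1-\mu}\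 \ge\ m^2.$$
   Context: A test suite $t\in\mathcal V^*$ consists of $|t|\ge1$ test cases. For an environment $e$, an implementation $c$ and a test suite $t$, the test harness returns a deterministic output vector $O(c,t\mid e)=(O_1(c,t\mid e),\dots,O_{|t|}(c,t\mid e))\in\mathbb O^{|t|}$ for a set $\mathbb O$ of possible test outputs. *)

theory Defs
  imports "HOL-Probability.Probability"
begin

text \<open>A test harness is modelled as a function H :: env => impl => suite => output list;
  O_k(c,t|e) is (H e c t) ! (k-1), i.e. 0-based index k-1.  Test suites and implementations
  are strings over the alphabet 'v, i.e. 'v list; |t| is the length of t.\<close>

definition agree_frac ::
  "('e \<Rightarrow> 'v list \<Rightarrow> 'v list \<Rightarrow> 'o list) \<Rightarrow> 'e \<Rightarrow> 'v list \<Rightarrow> 'v list \<Rightarrow> 'v list \<Rightarrow> real" where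
  "agree_frac H e c1 c2 t =
     (1 / real (length t)) * (\<Sum>k<length t. if H e c1 t ! k = H e c2 t ! k then 1 else 0)"

definition sim ::
  "'v list pmf \<Rightarrow> ('e \<Rightarrow> 'v list \<Rightarrow> 'v list \<Rightarrow> 'o list) \<Rightarrow> 'e \<Rightarrow> 'v list \<Rightarrow> 'v list \<Rightarrow> real" where
  "sim p H e c1 c2 = measure_pmf.expectation p (agree_frac H e c1 c2)"

definition iid_suites :: "'v list pmf \<Rightarrow> nat \<Rightarrow> (nat \<Rightarrow> 'v list) pmf" where
  "iid_suites p m = Pi_pmf {..<m} [] (\<lambda>_. p)"

definition sim_hat ::
  "nat \<Rightarrow> ('e \<Rightarrow> 'v list \<Rightarrow> 'v list \<Rightarrow> 'o list) \<Rightarrow> 'e \<Rightarrow> 'v list \<Rightarrow> 'v list \<Rightarrow> (nat \<Rightarrow> 'v list) \<Rightarrow> real" where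
  "sim_hat m H e c1 c2 ts = (1 / real m) * (\<Sum>j<m. agree_frac H e c1 c2 (ts j))"

definition sim_hat_inf ::
  "nat \<Rightarrow> ('e \<Rightarrow> 'v list \<Rightarrow> 'v list \<Rightarrow> 'o list) \<Rightarrow> 'e \<Rightarrow> 'v list \<Rightarrow> 'v list \<Rightarrow> (nat \<Rightarrow> 'v list) \<Rightarrow> real" where
  "sim_hat_inf m H e c1 c2 ts = lim (\<lambda>s. (sim_hat m H e c1 c2 ts) ^ s)"

text \<open>Signal-to-noise ratio (E X)^2 / Var X, valued in the extended reals
  (positive/0 = \<infinity>, 0/0 = 0).\<close>
definition SNR :: "'a pmf \<Rightarrow> ('a \<Rightarrow> real) \<Rightarrow> ereal" where
  "SNR M X = ereal ((measure_pmf.expectation M X)\<^sup>2) / ereal (measure_pmf.variance M X)"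

end

theory Submission
  imports Defs
begin

lemma pmf_int_bdd:
  fixes f :: "'a \<Rightarrow> real"
  assumes "\<And>x. \<bar>f x\<bar> \<le> B"
  shows "integrable (measure_pmf M) f"
  by (rule measure_pmf.integrable_const_bound[where B=B]) (auto simp: assms)

lemma agree_frac_bounds:
  "0 \<le> agree_frac H e c1 c2 t \<and> agree_frac H e c1 c2 t \<le> 1"
proof -
  let ?s = "(\<Sum>k<length t. if H e c1 t ! k = H e c2 t ! k then 1 else 0::real)"
  have s0: "0 \<le> ?s" by (intro sum_nonneg) auto
  have s1: "?s \<le> real (length t)"
    using sum_bounded_above[of "{..<length t}" "\<lambda>k. if H e c1 t ! k = H e c2 t ! k then 1 else (0::real)" 1]
    by auto
  show ?thesis
  proof (cases "length t = 0")
    case True then show ?thesis by (simp add: agree_frac_def)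
  next
    case False then show ?thesis using s0 s1 by (auto simp: agree_frac_def field_simps)
  qed
qed

lemma exp_comp:
  fixes g :: "'a \<Rightarrow> real" and m :: nat
  assumes "j < m"
  shows "measure_pmf.expectation (Pi_pmf {..<m} d (\<lambda>_. p)) (\<lambda>ts. g (ts j)) = measure_pmf.expectation p g"
proof -
  have "map_pmf (\<lambda>ts. ts j) (Pi_pmf {..<m} d (\<lambda>_. p)) = p"
    using assms by (subst Pi_pmf_component) auto
  then show ?thesis by (metis integral_map_pmf)
qed

lemma prod_two:
  assumes "finite A" "i \<in> A" "j \<in> A" "i \<noteq> j"
  shows "(\<Prod>x\<in>A. if x = i \<or> x = j then h x else 1) = h i * (h j :: 'b :: comm_monoid_mult)"
proof -
  have "(\<Prod>x\<in>{i,j}. h x) = (\<Prod>x\<in>A. if x = i \<or> x = j then h x else 1)"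
    by (rule prod.mono_neutral_cong_left) (use assms in auto)
  then show ?thesis using assms by simp
qed

lemma exp_pair:
  fixes g :: "'a \<Rightarrow> real" and m :: nat
  assumes "i < m" "j < m" "i \<noteq> j" "\<And>x. 0 \<le> g x" "\<And>x. g x \<le> 1"
  shows "measure_pmf.expectation (Pi_pmf {..<m} d (\<lambda>_. p)) (\<lambda>ts. g (ts i) * g (ts j))
         = measure_pmf.expectation p g * measure_pmf.expectation p g"
proof -
  let ?f = "\<lambda>x v. if x = i \<or> x = j then g v else 1"
  have bd: "\<bar>?f x v\<bar> \<le> 1" for x v using assms(4,5)[of v] by auto
  have "measure_pmf.expectation (Pi_pmf {..<m} d (\<lambda>_. p)) (\<lambda>y. \<Prod>x\<in>{..<m}. ?f x (y x))
        = (\<Prod>x\<in>{..<m}. measure_pmf.expectation p (\<lambda>v. ?f x v))"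
    by (rule expectation_prod_Pi_pmf) (auto intro: pmf_int_bdd[where B=1] bd simp: assms(4))
  moreover have "(\<lambda>y. \<Prod>x\<in>{..<m}. ?f x (y x)) = (\<lambda>ts. g (ts i) * g (ts j))"
  proof (rule ext)
    fix y show "(\<Prod>x\<in>{..<m}. ?f x (y x)) = g (y i) * g (y j)"
      using prod_two[of "{..<m}" i j "\<lambda>x. g (y x)"] assms(1-3) by auto
  qed
  moreover have "(\<Prod>x\<in>{..<m}. measure_pmf.expectation p (\<lambda>v. ?f x v))
     = (\<Prod>x\<in>{..<m}. if x = i \<or> x = j then measure_pmf.expectation p g else 1)"
    by (intro prod.cong refl) auto
  moreover have "\<dots> = measure_pmf.expectation p g * measure_pmf.expectation p g"
    using prod_two[of "{..<m}" i j "\<lambda>_. measure_pmf.expectation p g"] assms(1-3) by auto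
  ultimately show ?thesis by simp
qed

theorem theorem4p11:
  fixes p :: "('v::finite) list pmf"
    and H :: "'e \<Rightarrow> 'v list \<Rightarrow> 'v list \<Rightarrow> 'o list"
    and e :: 'e and c1 c2 :: "'v list" and m :: nat and \<mu> :: real
  assumes suite_nonempty: "\<And>t. t \<in> set_pmf p \<Longrightarrow> length t \<ge> 1"
    and out_len: "\<And>c t. length (H e c t) = length t"
    and mu_def: "sim p H e c1 c2 = \<mu>"
    and mu_pos: "0 < \<mu>" and mu_lt1: "\<mu> < 1"
    and m_pos: "m \<ge> 1"
  shows "SNR (iid_suites p m) (sim_hat m H e c1 c2) / SNR (iid_suites p m) (sim_hat_inf m H e c1 c2)
           \<ge> ereal (real m * (1 / \<mu>) ^ (m - 1) * ((1 - \<mu> ^ m) / (1 - \<mu>)))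
       \<and> real m * (1 / \<mu>) ^ (m - 1) * ((1 - \<mu> ^ m) / (1 - \<mu>)) \<ge> (real m)\<^sup>2"
proof -
  define a where "a = agree_frac H e c1 c2"
  define P where "P = iid_suites p m"
  have P_eq: "P = Pi_pmf {..<m} [] (\<lambda>_. p)" by (simp add: P_def iid_suites_def)
  have a0: "0 \<le> a t" for t using agree_frac_bounds[of H e c1 c2 t] unfolding a_def by blast
  have a1: "a t \<le> 1" for t using agree_frac_bounds[of H e c1 c2 t] unfolding a_def by blast
  have int_a: "integrable (measure_pmf M) a" for M
    by (rule pmf_int_bdd[where B=1]) (metis a0 a1 abs_of_nonneg)
  have int_a2: "integrable (measure_pmf M) (\<lambda>t. (a t)^2)" for M
    by (rule pmf_int_bdd[where B=1]) (metis a0 a1 abs_of_nonneg abs_square_le_1 abs_power2 power2_abs)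
  have mu: "measure_pmf.expectation p a = \<mu>" using mu_def by (simp add: sim_def a_def)
  define v where "v = measure_pmf.expectation p (\<lambda>t. (a t)^2)"
  have v_le: "v \<le> \<mu>"
  proof -
    have "v \<le> measure_pmf.expectation p a" unfolding v_def
      using int_a2 int_a a0 a1
      by (intro integral_mono) (auto simp: power2_eq_square abs_square_le_1 mult_left_le)
    then show ?thesis using mu by simp
  qed
  define S where "S ts = (\<Sum>j<m. a (ts j))" for ts
  have ES: "measure_pmf.expectation P S = m * \<mu>"
  proof -
    have "measure_pmf.expectation P S = (\<Sum>j<m. measure_pmf.expectation P (\<lambda>ts. a (ts j)))"
      unfolding S_def
      by (intro Bochner_Integration.integral_sum pmf_int_bdd[where B=1]) (metis a0 a1 abs_of_nonneg)
    also have "\<dots> = (\<Sum>j<m. \<mu>)"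
      by (intro sum.cong refl) (simp add: P_eq exp_comp mu)
    finally show ?thesis by simp
  qed
  have int_ij: "integrable P (\<lambda>ts. a (ts i) * a (ts j))" for i j
    by (rule pmf_int_bdd[where B=1]) (simp add: abs_mult a0 a1 mult_le_one)
  have ES2: "measure_pmf.expectation P (\<lambda>ts. (S ts)^2) = m * v + m * (m - 1) * \<mu>^2"
  proof -
    have "measure_pmf.expectation P (\<lambda>ts. (S ts)^2)
        = measure_pmf.expectation P (\<lambda>ts. \<Sum>i<m. \<Sum>j<m. a (ts i) * a (ts j))"
      by (simp add: S_def power2_eq_square sum_product)
    also have "\<dots> = (\<Sum>i<m. measure_pmf.expectation P (\<lambda>ts. \<Sum>j<m. a (ts i) * a (ts j)))"
      by (intro Bochner_Integration.integral_sum Bochner_Integration.integrable_sum int_ij)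
    also have "\<dots> = (\<Sum>i<m. \<Sum>j<m. measure_pmf.expectation P (\<lambda>ts. a (ts i) * a (ts j)))"
      by (intro sum.cong refl Bochner_Integration.integral_sum int_ij)
    also have "\<dots> = (\<Sum>i<m. v + (real m - 1) * \<mu>^2)"
    proof (intro sum.cong refl)
      fix i assume i: "i \<in> {..<m}"
      have "(\<Sum>j<m. measure_pmf.expectation P (\<lambda>ts. a (ts i) * a (ts j)))
          = measure_pmf.expectation P (\<lambda>ts. a (ts i) * a (ts i))
            + (\<Sum>j\<in>{..<m}-{i}. measure_pmf.expectation P (\<lambda>ts. a (ts i) * a (ts j)))"
        using i by (simp add: sum.remove)
      also have "measure_pmf.expectation P (\<lambda>ts. a (ts i) * a (ts i)) = v"
        using exp_comp[where g="\<lambda>t. a t * a t" and m=m and j=i and d="[]" and p=p] i by (simp add: v_def P_eq power2_eq_square)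
      also have "(\<Sum>j\<in>{..<m}-{i}. measure_pmf.expectation P (\<lambda>ts. a (ts i) * a (ts j)))
           = (\<Sum>j\<in>{..<m}-{i}. \<mu>^2)"
        by (intro sum.cong refl) (use i exp_pair[where g=a and m=m and i=i and d="[]" and p=p] a0 a1 in \<open>auto simp: P_eq mu power2_eq_square\<close>)
      also have "\<dots> = (real m - 1) * \<mu>^2" using i m_pos by (simp add: of_nat_diff)
      finally show "(\<Sum>j<m. measure_pmf.expectation P (\<lambda>ts. a (ts i) * a (ts j))) = v + (real m - 1) * \<mu>^2" .
    qed
    also have "\<dots> = m * v + m * (m - 1) * \<mu>^2" using m_pos by (simp add: of_nat_diff algebra_simps)
    finally show ?thesis .
  qed
  have int_S: "integrable P S"
    unfolding S_def by (intro Bochner_Integration.integrable_sum pmf_int_bdd[where B=1]) (metis a0 a1 abs_of_nonneg)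
  have int_S2: "integrable P (\<lambda>ts. (S ts)^2)"
    unfolding S_def power2_eq_square sum_product
    by (intro Bochner_Integration.integrable_sum int_ij)
  have mpos: "real m > 0" using m_pos by simp
  have sh: "sim_hat m H e c1 c2 = (\<lambda>ts. S ts / real m)"
    by (auto simp: sim_hat_def S_def a_def)
  have E1: "measure_pmf.expectation P (sim_hat m H e c1 c2) = \<mu>"
    using ES mpos by (simp add: sh)
  define V1 where "V1 = measure_pmf.variance P (sim_hat m H e c1 c2)"
  have V1_eq: "V1 = (v - \<mu>^2) / real m"
  proof -
    have "V1 = measure_pmf.expectation P (\<lambda>ts. (S ts / real m)^2) - \<mu>^2"
      unfolding V1_def using E1
      by (subst measure_pmf.variance_eq) (auto simp: sh power_divide int_S int_S2)
    also have "measure_pmf.expectation P (\<lambda>ts. (S ts / real m)^2) = (m * v + m * (m - 1) * \<mu>^2) / (real m)^2"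
      by (simp add: power_divide ES2)
    finally have h: "V1 = (m * v + m * (m - 1) * \<mu>^2) / (real m)^2 - \<mu>^2" .
    have "(m * v + m * (m - 1) * \<mu>^2) / (real m)^2 = (v + (real m - 1) * \<mu>^2) / real m"
      using mpos m_pos by (simp add: of_nat_diff power2_eq_square field_simps)
    with h have "V1 = (v + (real m - 1) * \<mu>^2) / real m - \<mu>^2" by simp
    then show ?thesis using mpos by (simp add: diff_divide_distrib add_divide_distrib algebra_simps)
  qed
  have V1_nn: "V1 \<ge> 0" unfolding V1_def by (intro Bochner_Integration.integral_nonneg) auto
  have V1_le: "V1 \<le> (\<mu> - \<mu>^2) / real m"
    unfolding V1_eq using v_le mpos by (simp add: divide_right_mono)
  define f where "f t = (if a t = 1 then 1 else 0::real)" for t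
  define q where "q = measure_pmf.expectation p f"
  have int_f: "integrable (measure_pmf M) f" for M
    by (rule pmf_int_bdd[where B=1]) (simp add: f_def)
  have q_nn: "0 \<le> q" unfolding q_def by (intro Bochner_Integration.integral_nonneg) (simp add: f_def)
  have q_le: "q \<le> \<mu>"
  proof -
    have "q \<le> measure_pmf.expectation p a" unfolding q_def
      by (intro integral_mono int_f int_a) (auto simp: f_def a0)
    then show ?thesis using mu by simp
  qed
  have S_nn: "0 \<le> S ts" for ts unfolding S_def by (intro sum_nonneg a0)
  have S_le: "S ts \<le> real m" for ts
    unfolding S_def using sum_bounded_above[of "{..<m}" "\<lambda>j. a (ts j)" 1] a1 by auto
  have all1: "sim_hat m H e c1 c2 ts = 1 \<longleftrightarrow> (\<forall>j<m. a (ts j) = 1)" for ts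
  proof
    assume "sim_hat m H e c1 c2 ts = 1"
    then have "S ts = real m" using mpos by (simp add: sh)
    then have "(\<Sum>j<m. 1 - a (ts j)) = 0" by (simp add: S_def sum_subtractf)
    then have "\<forall>j\<in>{..<m}. 1 - a (ts j) = 0"
      by (subst sum_nonneg_eq_0_iff[symmetric]) (auto simp: a1)
    then show "\<forall>j<m. a (ts j) = 1" by auto
  next
    assume "\<forall>j<m. a (ts j) = 1"
    then have "S ts = real m" by (simp add: S_def)
    then show "sim_hat m H e c1 c2 ts = 1" using mpos by (simp add: sh)
  qed
  have shi: "sim_hat_inf m H e c1 c2 ts = (\<Prod>j<m. f (ts j))" for ts
  proof (cases "\<forall>j<m. a (ts j) = 1")
    case True
    then have "sim_hat m H e c1 c2 ts = 1" using all1 by blast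
    moreover have "(\<Prod>j<m. f (ts j)) = 1" using True by (simp add: f_def)
    ultimately show ?thesis by (simp add: sim_hat_inf_def limI)
  next
    case False
    then obtain j where j: "j < m" "a (ts j) \<noteq> 1" by auto
    have "(\<Prod>j<m. f (ts j)) = 0" using j by (intro prod_zero) (auto simp: f_def)
    moreover have "sim_hat m H e c1 c2 ts \<noteq> 1" using all1 False by blast
    moreover have "0 \<le> sim_hat m H e c1 c2 ts" "sim_hat m H e c1 c2 ts \<le> 1"
      using S_nn[of ts] S_le[of ts] mpos by (auto simp: sh)
    ultimately show ?thesis unfolding sim_hat_inf_def
      by (simp add: limI[OF LIMSEQ_power_zero])
  qed
  have shi_fun: "sim_hat_inf m H e c1 c2 = (\<lambda>ts. \<Prod>j<m. f (ts j))" using shi by auto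
  define Q where "Q = q ^ m"
  have E2: "measure_pmf.expectation P (sim_hat_inf m H e c1 c2) = Q"
    unfolding shi_fun P_eq Q_def q_def
    by (subst expectation_prod_Pi_pmf[where f="\<lambda>_. f"]) (auto simp: int_f f_def)
  have sq: "(sim_hat_inf m H e c1 c2 ts)^2 = sim_hat_inf m H e c1 c2 ts" for ts
  proof (cases "\<forall>j<m. a (ts j) = 1")
    case True
    then have "(\<Prod>j<m. f (ts j)) = 1" by (simp add: f_def)
    then show ?thesis unfolding shi by simp
  next
    case False
    then obtain j where j: "j < m" "a (ts j) \<noteq> 1" by auto
    have "(\<Prod>j<m. f (ts j)) = 0" using j by (intro prod_zero) (auto simp: f_def)
    then show ?thesis unfolding shi by (metis power2_eq_square mult_zero_left)
  qed
  define V2 where "V2 = measure_pmf.variance P (sim_hat_inf m H e c1 c2)"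
  have int_shi: "integrable P (sim_hat_inf m H e c1 c2)"
    unfolding shi_fun P_eq
    by (intro integrable_prod_Pi_pmf int_f) auto
  have V2_eq: "V2 = Q - Q^2"
    unfolding V2_def using E2 sq int_shi
    by (subst measure_pmf.variance_eq) auto
  define T where "T = real m * (1 / \<mu>) ^ (m - 1) * ((1 - \<mu> ^ m) / (1 - \<mu>))"
  have inv1: "(1 / \<mu>) ^ (m - 1) * \<mu> ^ (m - 1) = 1"
    using mu_pos by (simp add: power_one_over)
  have second: "T \<ge> (real m)^2"
  proof -
    have geo: "(1 - \<mu> ^ m) / (1 - \<mu>) = (\<Sum>k<m. \<mu> ^ k)"
      using mu_lt1 by (simp add: sum_gp_strict)
    have "(\<Sum>k<m. \<mu> ^ (m - 1)) \<le> (\<Sum>k<m. \<mu> ^ k)"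
      by (intro sum_mono power_decreasing) (use mu_pos mu_lt1 in auto)
    then have ge: "real m * \<mu> ^ (m - 1) \<le> (\<Sum>k<m. \<mu> ^ k)" by simp
    have "(real m)^2 = real m * (1 / \<mu>) ^ (m - 1) * (real m * \<mu> ^ (m - 1))"
      using inv1 by (simp add: power2_eq_square algebra_simps)
    also have "\<dots> \<le> real m * (1 / \<mu>) ^ (m - 1) * (\<Sum>k<m. \<mu> ^ k)"
      using ge mu_pos by (intro mult_left_mono) auto
    finally show ?thesis unfolding T_def geo .
  qed
  have SNR1: "SNR P (sim_hat m H e c1 c2) = ereal (\<mu>^2) / ereal V1"
    by (simp add: SNR_def V1_def E1)
  have SNR2: "SNR P (sim_hat_inf m H e c1 c2) = ereal (Q^2) / ereal V2"
    by (simp add: SNR_def V2_def E2)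
  have Q_nn: "0 \<le> Q" unfolding Q_def using q_nn by simp
  have Q_le: "Q \<le> \<mu> ^ m" unfolding Q_def using q_nn q_le by (intro power_mono) auto
  have mum_le: "\<mu> ^ m \<le> \<mu>" using power_decreasing[of 1 m \<mu>] mu_pos mu_lt1 m_pos by simp
  have first: "SNR P (sim_hat m H e c1 c2) / SNR P (sim_hat_inf m H e c1 c2) \<ge> ereal T"
  proof (cases "Q = 0")
    case True
    then have "SNR P (sim_hat_inf m H e c1 c2) = 0" by (simp add: SNR2 V2_eq)
    moreover have "SNR P (sim_hat m H e c1 c2) > 0"
      using V1_nn mu_pos by (cases "V1 = 0") (auto simp: SNR1)
    moreover have "x / (0::ereal) = \<infinity>" if "x > 0" for x using that by (simp add: divide_ereal_def)
    ultimately show ?thesis by simp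
  next
    case False
    then have Qpos: "Q > 0" using Q_nn by simp
    have Qlt: "Q < 1" using Q_le mum_le mu_lt1 by simp
    have "Q - Q^2 = Q * (1 - Q)" by (simp add: power2_eq_square algebra_simps)
    then have V2pos: "V2 > 0" unfolding V2_eq using Qpos Qlt by simp
    have SNR2': "SNR P (sim_hat_inf m H e c1 c2) = ereal (Q / (1 - Q))"
      using V2pos Qpos Qlt by (simp add: SNR2 V2_eq power2_eq_square field_simps)
    have QQ: "Q / (1 - Q) > 0" using Qpos Qlt by simp
    show ?thesis
    proof (cases "V1 = 0")
      case True
      then show ?thesis using mu_pos QQ by (simp add: SNR1 SNR2')
    next
      case False
      then have V1pos: "V1 > 0" using V1_nn by simp
      have mupos': "0 < \<mu> - \<mu>^2" using mu_pos mu_lt1 by (simp add: power2_eq_square)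
      have A: "real m * \<mu> / (1 - \<mu>) \<le> \<mu>^2 / V1"
      proof -
        have "\<mu>^2 / ((\<mu> - \<mu>^2) / real m) \<le> \<mu>^2 / V1"
          using V1pos V1_le mupos' mpos by (intro divide_left_mono) auto
        moreover have "\<mu>^2 / ((\<mu> - \<mu>^2) / real m) = real m * \<mu> / (1 - \<mu>)"
          using mu_pos mu_lt1 mpos by (simp add: power2_eq_square field_simps)
        ultimately show ?thesis by simp
      qed
      have B: "(1 - \<mu>^m) / \<mu>^m \<le> (1 - Q) / Q"
      proof -
        have "1 / \<mu>^m \<le> 1 / Q" using Qpos Q_le by (intro divide_left_mono) auto
        then show ?thesis using Qpos mu_pos by (simp add: diff_divide_distrib)
      qed
      have B0: "0 \<le> (1 - \<mu>^m) / \<mu>^m" using mum_le mu_lt1 mu_pos by simp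
      have A0: "0 \<le> real m * \<mu> / (1 - \<mu>)" using mu_pos mu_lt1 by simp
      have Teq: "T = (real m * \<mu> / (1 - \<mu>)) * ((1 - \<mu>^m) / \<mu>^m)"
      proof -
        have "\<mu> ^ m = \<mu> * \<mu> ^ (m - 1)" using m_pos by (cases m) auto
        then have "\<mu> / \<mu>^m = (1 / \<mu>) ^ (m - 1)" using mu_pos by (simp add: power_one_over)
        then show ?thesis unfolding T_def using mu_pos mu_lt1 by (simp add: field_simps)
      qed
      have "T \<le> (\<mu>^2 / V1) * ((1 - Q) / Q)"
        unfolding Teq by (intro mult_mono A B A0) (use Qpos Qlt V1pos B0 in auto)
      moreover have "SNR P (sim_hat m H e c1 c2) / SNR P (sim_hat_inf m H e c1 c2)
          = ereal ((\<mu>^2 / V1) * ((1 - Q) / Q))"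
        using V1pos QQ Qpos Qlt by (simp add: SNR1 SNR2' field_simps)
      ultimately show ?thesis by simp
    qed
  qed
  show ?thesis using first second unfolding T_def P_def by simp
qed

end
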